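(* Let Assumptions A1 and A2 hold (see context) and let $\kappa = L/\mu > 1$. Run Algorithm PBA with $\alpha = \frac{1}{L}$, $\eta = \frac{\sqrt{\kappa}-1}{\sqrt{\kappa}+1}$, stepsize $0<\beta \le \frac{1}{2}(L_\Phi + \Gamma + \kappa^2)^{-1}$, and number of inner iterations $T \ge \frac{\ln(8(1+\kappa))}{\ln\big((1-\kappa^{-1/2})^{-1}\big)}$ (so $T = \mathcal{O}(\sqrt{\kappa}\ln\kappa)$). Define the potential function $$H(x,y') := \Phi(x) + h(x) + \tfrac{7}{8}\,\|y^T(x,y') - y^*(x)\|^2 .$$ Then the iterates $\{(x_k,y_k)\}_k$ satisfy, for all $k$, $$H(x_{k+1},y_{k+1}) \le H(x_k,y_k) - \frac{1}{4\beta}\|x_{k+1}-x_k\|^2 - \frac{1}{8}\Big(\|y_{k+1}-y^*(x_k)\|^2 + \|y_{k+2}-y^*(x_{k+1})\|^2\Big).$$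
   Context: Problem: $\min_{x\in\mathbb{R}^d} \Phi(x)+h(x)$ where $\Phi(x) := f(x,y^*(x))$ and $y^*(x) := \arg\min_{y\in\mathbb{R}^p} g(x,y)$, with $f,g:\mathbb{R}^d\times\mathbb{R}^p\to\mathbb{R}$ jointly continuously differentiable. Write $z=(x,y)$. Assumption A1: (1) $g(x,\cdot)$ is $\mu$-strongly convex for every $x$ ($\Phi$ may be nonconvex); (2) $h:\mathbb{R}^d\to\mathbb{R}\cup\{+\infty\}$ is proper and lower-semicontinuous (possibly nonsmooth and nonconvex); (3) $\Phi+h$ is bounded below and has bounded sub-level sets. Assumption A2: (1) $f$ is $M$-Lipschitz, and $\nabla f$ and $\nabla g$ are $L$-Lipschitz (in $z$); (2) the Jacobian $\nabla_x\nabla_y g$ is $\tau$-Lipschitz and the Hessian $\nabla_y^2 g$ is $\rho$-Lipschitz (in $z$). Set $\kappa = L/\mu$, $L_\Phi = L + \frac{2L^2+\tau M^2}{\mu} + \frac{\rho L M + L^3 + \tau M L}{\mu^2} + \frac{\rho L^2 M}{\mu^3}$, and $\Gamma = 3L^2 + \frac{3\tau^2M^2}{\mu^2} + 6L^2(1+\sqrt{\kappa})^2\big(\kappa + \frac{\rho M}{\mu^2}\big)^2$. Proximal map: $\mathrm{prox}_{\beta h}(v) := \arg\min_u \{\beta h(u) + \frac12\|u-v\|^2\}$ (possibly set-valued). Algorithm PBA (proximal BiO-AIDm) with parameters $\alpha,\beta,\eta>0$, $T\in\mathbb{N}$, initial $x_0,y_0$: for $k=0,1,2,\dots$: set $y^0(x_k,y_k)=u_0=y_k$;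 for $t=1,\dots,T$: $u_t = y^{t-1}(x_k,y_k) - \alpha\nabla_y g(x_k, y^{t-1}(x_k,y_k))$, $y^t(x_k,y_k) = u_t + \eta(u_t - u_{t-1})$; set $y_{k+1} = y^T(x_k,y_k)$; compute $\widehat\nabla\Phi(x_k) = \nabla_x f(x_k,y_{k+1}) - \nabla_x\nabla_y g(x_k,y_{k+1})\hat v_k$ where $\hat v_k$ is the exact solution of $\nabla_y^2 g(x_k,y_{k+1})v = \nabla_y f(x_k,y_{k+1})$; update $x_{k+1}\in \mathrm{prox}_{\beta h}(x_k - \beta\widehat\nabla\Phi(x_k))$. For general $(x,y')$, $y^T(x,y')$ denotes the output of the same $T$-step inner loop applied to $g(x,\cdot)$ with initial point $y'$. *)

theory Defs
  imports "HOL-Analysis.Analysis" "HOL-Library.Extended_Real"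
begin

definition strongly_convex :: "real \<Rightarrow> ('b::real_inner \<Rightarrow> real) \<Rightarrow> bool" where
  "strongly_convex \<mu> \<phi> \<longleftrightarrow>
     (\<forall>y y' t. 0 \<le> t \<and> t \<le> 1 \<longrightarrow>
        \<phi> (t *\<^sub>R y + (1 - t) *\<^sub>R y') \<le> t * \<phi> y + (1 - t) * \<phi> y'
            - \<mu> / 2 * t * (1 - t) * (norm (y - y'))\<^sup>2)"

definition lower_semicontinuous :: "('a::topological_space \<Rightarrow> ereal) \<Rightarrow> bool" where
  "lower_semicontinuous h \<longleftrightarrow> (\<forall>x. h x \<le> Liminf (at x) h)"

text \<open>Lower-level solution y*(x) = argmin_y g(x,y) (unique under strong convexity).\<close>
definition ystar :: "('a \<Rightarrow> 'b \<Rightarrow> real) \<Rightarrow> 'a \<Rightarrow> 'b" where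
  "ystar g x = (THE y. \<forall>y'. g x y \<le> g x y')"

definition Phi :: "('a \<Rightarrow> 'b \<Rightarrow> real) \<Rightarrow> ('a \<Rightarrow> 'b \<Rightarrow> real) \<Rightarrow> 'a \<Rightarrow> real" where
  "Phi f g x = f x (ystar g x)"

definition prox :: "real \<Rightarrow> ('a::real_normed_vector \<Rightarrow> ereal) \<Rightarrow> 'a \<Rightarrow> 'a set" where
  "prox \<beta> h v = {u. \<forall>w. ereal \<beta> * h u + ereal ((norm (u - v))\<^sup>2 / 2)
                         \<le> ereal \<beta> * h w + ereal ((norm (w - v))\<^sup>2 / 2)}"

text \<open>State (u_t, y^t) of the T-step accelerated inner loop on g(x,.) started at y'
  (u_0 = y^0 = y'); gy is the partial gradient nabla_y g.\<close>
fun inner_state :: "('a \<Rightarrow> 'b \<Rightarrow> 'b::real_vector) \<Rightarrow> real \<Rightarrow> real \<Rightarrow> 'a \<Rightarrow> 'b \<Rightarrow> nat \<Rightarrow> 'b \<times> 'b" where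
  "inner_state gy \<alpha> \<eta> x y' 0 = (y', y')"
| "inner_state gy \<alpha> \<eta> x y' (Suc t) =
     (let (uprev, yprev) = inner_state gy \<alpha> \<eta> x y' t;
          u = yprev - \<alpha> *\<^sub>R gy x yprev
      in (u, u + \<eta> *\<^sub>R (u - uprev)))"

definition yT :: "('a \<Rightarrow> 'b \<Rightarrow> 'b::real_vector) \<Rightarrow> real \<Rightarrow> real \<Rightarrow> nat \<Rightarrow> 'a \<Rightarrow> 'b \<Rightarrow> 'b" where
  "yT gy \<alpha> \<eta> T x y' = snd (inner_state gy \<alpha> \<eta> x y' T)"

end

theory Submission
  imports Defs
begin

lemma taylor1d:
  fixes \<phi> \<phi>' :: "real \<Rightarrow> real"
  assumes d: "\<And>t. 0 \<le> t \<Longrightarrow> t \<le> 1 \<Longrightarrow> (\<phi> has_real_derivative \<phi>' t) (at t)"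
    and b: "\<And>t. 0 \<le> t \<Longrightarrow> t \<le> 1 \<Longrightarrow> \<phi>' t - \<phi>' 0 \<le> c * t"
  shows "\<phi> 1 - \<phi> 0 - \<phi>' 0 \<le> c / 2"
proof -
  define \<psi> where "\<psi> t = \<phi> t - t * \<phi>' 0 - c / 2 * t\<^sup>2" for t
  have "\<psi> 0 \<ge> \<psi> 1"
  proof (rule DERIV_nonpos_imp_nonincreasing[of 0 1 \<psi>])
    fix t :: real assume t: "0 \<le> t" "t \<le> 1"
    have "(\<psi> has_real_derivative (\<phi>' t - \<phi>' 0 - c * t)) (at t)"
      unfolding \<psi>_def
      by (auto intro!: derivative_eq_intros d[OF t])
    moreover have "\<phi>' t - \<phi>' 0 - c * t \<le> 0" using b[OF t] by simp
    ultimately show "\<exists>y. (\<psi> has_real_derivative y) (at t) \<and> y \<le> 0" by blast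
  qed simp
  then show ?thesis unfolding \<psi>_def by simp
qed

lemma line_deriv:
  fixes \<phi> :: "'v::real_inner \<Rightarrow> real"
  assumes "(\<phi> has_derivative (\<lambda>d. D \<bullet> d)) (at (p + t *\<^sub>R v))"
  shows "((\<lambda>s. \<phi> (p + s *\<^sub>R v)) has_real_derivative (D \<bullet> v)) (at t)"
proof -
  have l: "((\<lambda>s. p + s *\<^sub>R v) has_derivative (\<lambda>s. s *\<^sub>R v)) (at t)"
    by (rule derivative_eq_intros | simp)+
  have "((\<lambda>s. \<phi> (p + s *\<^sub>R v)) has_derivative (\<lambda>s. D \<bullet> (s *\<^sub>R v))) (at t)"
    by (rule has_derivative_compose[OF l assms])
  moreover have "(\<lambda>s. D \<bullet> (s *\<^sub>R v)) = (*) (D \<bullet> v)" by (auto simp: fun_eq_iff)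
  ultimately show ?thesis by (simp add: has_field_derivative_def)
qed

lemma lip_taylor_le:
  fixes \<phi> :: "'v::real_inner \<Rightarrow> real"
  assumes d: "\<And>p. (\<phi> has_derivative (\<lambda>d. D p \<bullet> d)) (at p)"
    and l: "L-lipschitz_on UNIV D"
  shows "\<phi> q - \<phi> p - D p \<bullet> (q - p) \<le> L / 2 * (norm (q - p))\<^sup>2"
proof -
  define v where "v = q - p"
  have "(\<lambda>s. \<phi> (p + s *\<^sub>R v)) 1 - (\<lambda>s. \<phi> (p + s *\<^sub>R v)) 0 - D (p + 0 *\<^sub>R v) \<bullet> v
        \<le> (L * (norm v)\<^sup>2) / 2"
  proof (rule taylor1d)
    fix t :: real assume t: "0 \<le> t" "t \<le> 1"
    show "((\<lambda>s. \<phi> (p + s *\<^sub>R v)) has_real_derivative D (p + t *\<^sub>R v) \<bullet> v) (at t)"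
      by (rule line_deriv[OF d])
    have "D (p + t *\<^sub>R v) \<bullet> v - D (p + 0 *\<^sub>R v) \<bullet> v = (D (p + t *\<^sub>R v) - D p) \<bullet> v"
      by (simp add: inner_diff_left)
    also have "\<dots> \<le> norm (D (p + t *\<^sub>R v) - D p) * norm v" by (rule norm_cauchy_schwarz)
    also have "norm (D (p + t *\<^sub>R v) - D p) \<le> L * norm (t *\<^sub>R v)"
      using lipschitz_onD[OF l, of "p + t *\<^sub>R v" p] by (simp add: dist_norm)
    then have "norm (D (p + t *\<^sub>R v) - D p) * norm v \<le> L * norm (t *\<^sub>R v) * norm v"
      by (simp add: mult_right_mono)
    also have "\<dots> = L * (norm v)\<^sup>2 * t" using t by (simp add: power2_eq_square)
    finally show "D (p + t *\<^sub>R v) \<bullet> v - D (p + 0 *\<^sub>R v) \<bullet> v \<le> L * (norm v)\<^sup>2 * t" .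
  qed
  then show ?thesis by (simp add: v_def)
qed

lemma lip_taylor_ge:
  fixes \<phi> :: "'v::real_inner \<Rightarrow> real"
  assumes d: "\<And>p. (\<phi> has_derivative (\<lambda>d. D p \<bullet> d)) (at p)"
    and l: "L-lipschitz_on UNIV D"
  shows "\<phi> q - \<phi> p - D p \<bullet> (q - p) \<ge> - (L / 2 * (norm (q - p))\<^sup>2)"
proof -
  have d2: "\<And>p. ((\<lambda>x. - \<phi> x) has_derivative (\<lambda>d. (- D p) \<bullet> d)) (at p)"
    using has_derivative_minus[OF d] by simp
  have l2: "L-lipschitz_on UNIV (\<lambda>x. - D x)"
    using l by (simp add: lipschitz_on_def dist_minus)
  show ?thesis using lip_taylor_le[OF d2 l2, of q p] by (simp add: inner_minus_left)
qed

lemma deriv_le: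
  fixes \<phi> :: "real \<Rightarrow> real"
  assumes d: "(\<phi> has_real_derivative D) (at 0)"
    and b: "\<And>t. 0 < t \<Longrightarrow> t \<le> 1 \<Longrightarrow> \<phi> t - \<phi> 0 \<le> t * (A - B * (1 - t))"
  shows "D \<le> A - B"
proof -
  have d': "(\<phi> has_real_derivative D) (at 0 within {0<..})"
    using d by (rule has_field_derivative_at_within)
  have q: "((\<lambda>t. (\<phi> t - \<phi> 0) / (t - 0)) \<longlongrightarrow> D) (at_right 0)"
    using d' by (simp add: has_field_derivative_iff)
  have r: "((\<lambda>t. A - B * (1 - t)) \<longlongrightarrow> A - B * (1 - 0)) (at_right (0::real))"
    by (intro tendsto_intros)
  have ev: "eventually (\<lambda>t. (\<phi> t - \<phi> 0) / (t - 0) \<le> A - B * (1 - t)) (at_right (0::real))"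
  proof -
    have "eventually (\<lambda>t. t < 1) (at_right (0::real))"
      by (auto simp: eventually_at_right_field intro!: exI[of _ 1])
    moreover have "eventually (\<lambda>t. 0 < t) (at_right (0::real))"
      by (simp add: eventually_at_right_less)
    ultimately show ?thesis
    proof eventually_elim
      case (elim t)
      then show ?case using b[of t] by (simp add: divide_le_eq mult.commute)
    qed
  qed
  have "D \<le> A - B * (1 - 0)"
    using tendsto_le[OF _ r q ev] by simp
  then show ?thesis by simp
qed

locale gset =
  fixes g :: "'a::euclidean_space \<Rightarrow> 'b::euclidean_space \<Rightarrow> real"
    and gx :: "'a \<Rightarrow> 'b \<Rightarrow> 'a" and gy :: "'a \<Rightarrow> 'b \<Rightarrow> 'b" and \<mu> L :: real
  assumes g_deriv: "\<And>a b. ((\<lambda>z. g (fst z) (snd z)) has_derivative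
                 (\<lambda>(u, w). gx a b \<bullet> u + gy a b \<bullet> w)) (at (a, b))"
    and grad_lip: "L-lipschitz_on UNIV (\<lambda>z. (gx (fst z) (snd z), gy (fst z) (snd z)))"
    and mu_pos: "\<mu> > 0"
    and sc: "\<And>a. strongly_convex \<mu> (g a)"

context gset
begin

lemma gdy: "(g a has_derivative (\<lambda>w. gy a b \<bullet> w)) (at b)"
proof -
  have p: "((\<lambda>w. (a, w)) has_derivative (\<lambda>w. (0, w))) (at b)"
    by (rule derivative_eq_intros | simp)+
  from has_derivative_compose[OF p g_deriv[of a b]] show ?thesis by simp
qed

lemma gy_lip_pair: "dist (gy a b) (gy a' b') \<le> L * dist (a, b) (a', b')"
proof -
  have "dist (gy a b) (gy a' b') \<le> dist (gx a b, gy a b) (gx a' b', gy a' b')"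
    using dist_snd_le[of "(gx a b, gy a b)" "(gx a' b', gy a' b')"] by simp
  also have "\<dots> \<le> L * dist (a, b) (a', b')"
    using lipschitz_onD[OF grad_lip, of "(a,b)" "(a',b')"] by simp
  finally show ?thesis .
qed

lemma L_nonneg: "0 \<le> L" using grad_lip lipschitz_on_nonneg by blast

lemma gy_lip_y: "L-lipschitz_on UNIV (gy a)"
  using gy_lip_pair[of a _ a] L_nonneg by (auto simp: lipschitz_on_def dist_Pair_Pair)

lemma gy_lip_x: "norm (gy a b - gy a' b) \<le> L * norm (a - a')"
  using gy_lip_pair[of a b a' b] by (simp add: dist_Pair_Pair dist_norm)

lemma sc_grad: "g a w \<ge> g a y + gy a y \<bullet> (w - y) + \<mu> / 2 * (norm (w - y))\<^sup>2"
proof -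
  define d where "d = w - y"
  have D: "((\<lambda>s. g a (y + s *\<^sub>R d)) has_real_derivative (gy a y \<bullet> d)) (at 0)"
    using line_deriv[of "g a" "gy a y" y 0 d] gdy by simp
  have "gy a y \<bullet> d \<le> (g a w - g a y) - \<mu> / 2 * (norm d)\<^sup>2"
  proof (rule deriv_le[OF D])
    fix t :: real assume t: "0 < t" "t \<le> 1"
    have "g a (t *\<^sub>R w + (1 - t) *\<^sub>R y) \<le> t * g a w + (1 - t) * g a y
            - \<mu> / 2 * t * (1 - t) * (norm (w - y))\<^sup>2"
      using sc[of a] t unfolding strongly_convex_def by auto
    moreover have "t *\<^sub>R w + (1 - t) *\<^sub>R y = y + t *\<^sub>R d"
      by (simp add: d_def algebra_simps)
    ultimately show "g a (y + t *\<^sub>R d) - g a (y + 0 *\<^sub>R d)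
        \<le> t * ((g a w - g a y) - \<mu> / 2 * (norm d)\<^sup>2 * (1 - t))"
      by (simp add: d_def algebra_simps)
  qed
  then show ?thesis by (simp add: d_def)
qed

lemma mono: "(gy a y - gy a w) \<bullet> (y - w) \<ge> \<mu> * (norm (y - w))\<^sup>2"
proof -
  have 1: "g a w \<ge> g a y + gy a y \<bullet> (w - y) + \<mu> / 2 * (norm (w - y))\<^sup>2" by (rule sc_grad)
  have 2: "g a y \<ge> g a w + gy a w \<bullet> (y - w) + \<mu> / 2 * (norm (y - w))\<^sup>2" by (rule sc_grad)
  have "norm (w - y) = norm (y - w)" by (rule norm_minus_commute)
  moreover have "gy a y \<bullet> (w - y) = - (gy a y \<bullet> (y - w))"
    by (metis inner_minus_right minus_diff_eq)
  ultimately show ?thesis using 1 2 by (simp add: inner_diff_left)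
qed

lemma descent: "g a w \<le> g a y + gy a y \<bullet> (w - y) + L / 2 * (norm (w - y))\<^sup>2"
  using lip_taylor_le[of "g a" "gy a" L w y] gdy gy_lip_y by auto

lemma min_ex: "\<exists>y. \<forall>y'. g a y \<le> g a y'"
proof -
  define R where "R = 2 * norm (gy a 0) / \<mu>"
  have cont: "continuous_on (cball 0 R) (g a)"
    using gdy has_derivative_continuous continuous_at_imp_continuous_on by blast
  have "R \<ge> 0" using mu_pos by (simp add: R_def)
  then obtain y0 where y0: "y0 \<in> cball 0 R" "\<forall>y\<in>cball 0 R. g a y0 \<le> g a y"
    using continuous_attains_inf[OF compact_cball _ cont] by fastforce
  have "g a y0 \<le> g a y'" for y'
  proof (cases "y' \<in> cball 0 R")
    case True then show ?thesis using y0 by blast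
  next
    case False
    then have nR: "norm y' > R" by simp
    have "g a y' \<ge> g a 0 + gy a 0 \<bullet> y' + \<mu> / 2 * (norm y')\<^sup>2"
      using sc_grad[where a=a and w=y' and y=0] by simp
    moreover have "gy a 0 \<bullet> y' \<ge> - (norm (gy a 0) * norm y')"
      using norm_cauchy_schwarz[of "- gy a 0" y'] by simp
    moreover have "\<mu> / 2 * (norm y')\<^sup>2 \<ge> norm (gy a 0) * norm y'"
    proof -
      have "norm (gy a 0) = \<mu> / 2 * R" using mu_pos by (simp add: R_def)
      then have "norm (gy a 0) * norm y' \<le> \<mu> / 2 * norm y' * norm y'"
      proof -
        have "\<mu> / 2 * R * norm y' \<le> \<mu> / 2 * norm y' * norm y'"
          using nR mu_pos \<open>R \<ge> 0\<close> by (intro mult_right_mono mult_left_mono) auto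
        then show ?thesis using \<open>norm (gy a 0) = \<mu> / 2 * R\<close> by (simp add: mult.commute mult.left_commute)
      qed
      then show ?thesis by (simp add: power2_eq_square mult.assoc)
    qed
    ultimately have "g a y' \<ge> g a 0" by linarith
    moreover have "g a y0 \<le> g a 0" using y0 \<open>R \<ge> 0\<close> by simp
    ultimately show ?thesis by linarith
  qed
  then show ?thesis by blast
qed

lemma min_grad:
  assumes y: "\<forall>y'. g a y \<le> g a y'"
  shows "gy a y = 0"
proof -
  define s where "s = 1 / (L + 1)"
  have s0: "s > 0" and sL: "L * s \<le> 1" using L_nonneg by (auto simp: s_def field_simps)
  define v where "v = gy a y"
  have "g a (y - s *\<^sub>R v) \<le> g a y + v \<bullet> (y - s *\<^sub>R v - y) + L / 2 * (norm (y - s *\<^sub>R v - y))\<^sup>2"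
    unfolding v_def by (rule descent)
  also have "\<dots> = g a y - s * (norm v)\<^sup>2 + L / 2 * s\<^sup>2 * (norm v)\<^sup>2"
    using s0 by (simp add: power2_norm_eq_inner power_mult_distrib)
  also have "\<dots> \<le> g a y - s / 2 * (norm v)\<^sup>2"
  proof -
    have "L * s\<^sup>2 \<le> s" using sL s0 by (simp add: power2_eq_square)
    then have "L / 2 * s\<^sup>2 * (norm v)\<^sup>2 \<le> s / 2 * (norm v)\<^sup>2"
      by (intro mult_right_mono) auto
    then show ?thesis by simp
  qed
  finally have "g a (y - s *\<^sub>R v) \<le> g a y - s / 2 * (norm v)\<^sup>2" .
  moreover have "g a y \<le> g a (y - s *\<^sub>R v)" using y by blast
  ultimately have "s / 2 * (norm v)\<^sup>2 \<le> 0" by linarith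
  then have "(norm v)\<^sup>2 \<le> 0" using s0 by (simp add: mult_le_0_iff)
  then show ?thesis by (simp add: v_def)
qed

lemma min_unique: "\<exists>!y. \<forall>y'. g a y \<le> g a y'"
proof -
  obtain y where y: "\<forall>y'. g a y \<le> g a y'" using min_ex by blast
  moreover have "y2 = y" if y2: "\<forall>y'. g a y2 \<le> g a y'" for y2
  proof -
    have "g a y2 \<ge> g a y + gy a y \<bullet> (y2 - y) + \<mu> / 2 * (norm (y2 - y))\<^sup>2" by (rule sc_grad)
    moreover have "gy a y = 0" by (rule min_grad[OF y])
    moreover have "g a y2 \<le> g a y" using y2 by blast
    ultimately have "\<mu> / 2 * (norm (y2 - y))\<^sup>2 \<le> 0" by simp
    then show ?thesis using mu_pos by (simp add: mult_le_0_iff)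
  qed
  ultimately show ?thesis by blast
qed

lemma ystar_min: "g a (ystar g a) \<le> g a y'"
  unfolding ystar_def using theI'[OF min_unique[of a]] by blast

lemma ystar_grad: "gy a (ystar g a) = 0"
  using min_grad ystar_min by blast

lemma ystar_lip: "norm (ystar g a - ystar g a') \<le> (L / \<mu>) * norm (a - a')"
proof -
  define d where "d = ystar g a - ystar g a'"
  have "\<mu> * (norm d)\<^sup>2 \<le> (gy a' (ystar g a) - gy a' (ystar g a')) \<bullet> d"
    unfolding d_def by (rule mono)
  also have "\<dots> = (gy a' (ystar g a) - gy a (ystar g a)) \<bullet> d"
    by (simp add: ystar_grad)
  also have "\<dots> \<le> norm (gy a' (ystar g a) - gy a (ystar g a)) * norm d"
    by (rule norm_cauchy_schwarz)
  also have "\<dots> \<le> L * norm (a - a') * norm d"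
    using gy_lip_x[of a' _ a] by (simp add: mult_right_mono norm_minus_commute)
  finally have "\<mu> * (norm d)\<^sup>2 \<le> L * norm (a - a') * norm d" .
  then have "\<mu> * norm d \<le> L * norm (a - a')"
    by (cases "norm d = 0") (auto simp: power2_eq_square L_nonneg)
  then show ?thesis using mu_pos by (simp add: d_def field_simps)
qed

end

lemma lyap_alg:
  fixes q L fy fu fu' fs aa bb gg ab ag bg :: real
  assumes L: "L > 0" and q: "0 < q" "q < 1"
    and P1: "fu' \<le> fy - gg / (2 * L)"
    and P2: "fs \<ge> fy - bg + q\<^sup>2 * L / 2 * bb"
    and P3: "fu \<ge> fy + q * (bg - ag)"
    and psd: "aa - 2 * ab + bb \<ge> 0"
  shows "fu' - fs + q\<^sup>2 * L / 2 * ((1 - q)\<^sup>2 * aa + q\<^sup>2 * bb + gg / (q\<^sup>2 * L\<^sup>2)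
            + 2 * q * (1 - q) * ab - 2 * (1 - q) / (q * L) * ag - 2 / L * bg)
         \<le> (1 - q) * (fu - fs + q\<^sup>2 * L / 2 * aa)"
proof -
  have eq: "q\<^sup>2 * L / 2 * ((1 - q)\<^sup>2 * aa + q\<^sup>2 * bb + gg / (q\<^sup>2 * L\<^sup>2)
            + 2 * q * (1 - q) * ab - 2 * (1 - q) / (q * L) * ag - 2 / L * bg)
     = q\<^sup>2 * L / 2 * ((1 - q)\<^sup>2 * aa + q\<^sup>2 * bb + 2 * q * (1 - q) * ab)
       + gg / (2 * L) - q * (1 - q) * ag - q\<^sup>2 * bg"
    using L q by (simp add: field_simps power2_eq_square)
  have id: "(1 - q) * (fu - fs + q\<^sup>2 * L / 2 * aa)
      - (fu' - fs + (q\<^sup>2 * L / 2 * ((1 - q)\<^sup>2 * aa + q\<^sup>2 * bb + 2 * q * (1 - q) * ab)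
       + gg / (2 * L) - q * (1 - q) * ag - q\<^sup>2 * bg))
     = (fy - gg / (2 * L) - fu') + q * (fs - (fy - bg + q\<^sup>2 * L / 2 * bb))
       + (1 - q) * (fu - (fy + q * (bg - ag))) + q * (1 - q) * (q\<^sup>2 * L / 2) * (aa - 2 * ab + bb)"
    using L by (simp add: field_simps power2_eq_square)
  have h2: "q * (fs - (fy - bg + q\<^sup>2 * L / 2 * bb)) \<ge> 0"
    using P2 q by (intro mult_nonneg_nonneg) auto
  have h3: "(1 - q) * (fu - (fy + q * (bg - ag))) \<ge> 0"
    using P3 q by (intro mult_nonneg_nonneg) auto
  have h4: "q * (1 - q) * (q\<^sup>2 * L / 2) * (aa - 2 * ab + bb) \<ge> 0"
    using psd q L by (intro mult_nonneg_nonneg) auto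
  show ?thesis unfolding eq using P1 h2 h3 h4 id by linarith
qed

context gset
begin

lemma nesterov:
  assumes muL: "\<mu> < L"
  shows "(norm (yT gy (1 / L) ((sqrt (L / \<mu>) - 1) / (sqrt (L / \<mu>) + 1)) T a y0 - ystar g a))\<^sup>2
         \<le> (1 + L / \<mu>) * (1 - 1 / sqrt (L / \<mu>)) ^ T * (norm (y0 - ystar g a))\<^sup>2"
proof -
  define ys where "ys = ystar g a"
  define \<kappa> where "\<kappa> = L / \<mu>"
  define q where "q = 1 / sqrt \<kappa>"
  define \<eta> where "\<eta> = (sqrt \<kappa> - 1) / (sqrt \<kappa> + 1)"
  have Lpos: "L > 0" using mu_pos muL by simp
  have k1: "\<kappa> > 1" using mu_pos muL by (simp add: \<kappa>_def)
  have sk: "sqrt \<kappa> > 1" using k1 by simp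
  have q0: "q > 0" and q1: "q < 1" using sk by (auto simp: q_def)
  have mu_eq: "\<mu> = q\<^sup>2 * L"
    using k1 mu_pos by (simp add: q_def \<kappa>_def power_divide)
  have eta_eq: "\<eta> = (1 - q) / (1 + q)"
  proof -
    have "(1 - 1 / s) / (1 + 1 / s) = (s - 1) / (s + 1)" if "s > 0" for s :: real
    proof -
      have "1 - 1 / s = (s - 1) / s" "1 + 1 / s = (s + 1) / s" using that by (auto simp: field_simps)
      then show ?thesis using that by simp
    qed
    then show ?thesis using sk by (simp add: \<eta>_def q_def)
  qed
  define Z where "Z u yv = (1 / q) *\<^sub>R ((1 + q) *\<^sub>R yv - u)" for u yv :: 'b
  define V where "V u yv = g a u - g a ys + \<mu> / 2 * (norm (Z u yv - ys))\<^sup>2" for u yv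
  have gys: "gy a ys = 0" by (simp add: ys_def ystar_grad)
  have step: "V (yv - (1 / L) *\<^sub>R gy a yv)
                ((yv - (1 / L) *\<^sub>R gy a yv) + \<eta> *\<^sub>R ((yv - (1 / L) *\<^sub>R gy a yv) - u))
              \<le> (1 - q) * V u yv" for u yv
  proof -
    define gv where "gv = gy a yv"
    define u' where "u' = yv - (1 / L) *\<^sub>R gv"
    define yv' where "yv' = u' + \<eta> *\<^sub>R (u' - u)"
    define A where "A = Z u yv - ys"
    define B where "B = yv - ys"
    have eta1: "(1 + q) * \<eta> = 1 - q" using q0 by (simp add: eta_eq)
    have e1: "(1 + q) *\<^sub>R yv' = (1 + q) *\<^sub>R u' + (1 - q) *\<^sub>R (u' - u)"
      unfolding yv'_def scaleR_add_right scaleR_scaleR eta1 ..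
    have vid: "Z u' yv' - ys = (1 - q) *\<^sub>R A + q *\<^sub>R B - (1 / (q * L)) *\<^sub>R gv"
    proof (rule euclidean_eqI)
      fix i :: 'b assume "i \<in> Basis"
      show "(Z u' yv' - ys) \<bullet> i = ((1 - q) *\<^sub>R A + q *\<^sub>R B - (1 / (q * L)) *\<^sub>R gv) \<bullet> i"
        using q0 q1 Lpos unfolding Z_def e1
        by (simp add: A_def B_def Z_def u'_def inner_diff_left inner_add_left
            field_simps)
    qed
    have uy: "u - yv = q *\<^sub>R (B - A)"
      using q0 by (simp add: A_def B_def Z_def algebra_simps)
    have P1: "g a u' \<le> g a yv - (gv \<bullet> gv) / (2 * L)"
    proof -
      have "g a u' \<le> g a yv + gv \<bullet> (u' - yv) + L / 2 * (norm (u' - yv))\<^sup>2"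
        unfolding gv_def by (rule descent)
      also have "\<dots> = g a yv - (gv \<bullet> gv) / (2 * L)"
      proof -
        have nn: "norm gv * norm gv = gv \<bullet> gv" by (simp add: power2_norm_eq_inner[symmetric] power2_eq_square)
        show ?thesis using Lpos by (simp add: u'_def power2_eq_square field_simps nn)
      qed
      finally show ?thesis .
    qed
    have P2: "g a ys \<ge> g a yv - B \<bullet> gv + q\<^sup>2 * L / 2 * (B \<bullet> B)"
    proof -
      have "g a ys \<ge> g a yv + gv \<bullet> (ys - yv) + \<mu> / 2 * (norm (ys - yv))\<^sup>2"
        unfolding gv_def by (rule sc_grad)
      moreover have "gv \<bullet> (ys - yv) = - (B \<bullet> gv)" by (simp add: B_def inner_diff_left inner_diff_right inner_commute)
      moreover have "(norm (ys - yv))\<^sup>2 = B \<bullet> B"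
        by (simp add: B_def power2_norm_eq_inner inner_diff_left inner_diff_right inner_commute)
      ultimately show ?thesis by (simp add: mu_eq)
    qed
    have P3: "g a u \<ge> g a yv + q * (B \<bullet> gv - A \<bullet> gv)"
    proof -
      have "g a u \<ge> g a yv + gv \<bullet> (u - yv) + \<mu> / 2 * (norm (u - yv))\<^sup>2"
        unfolding gv_def by (rule sc_grad)
      moreover have "\<mu> / 2 * (norm (u - yv))\<^sup>2 \<ge> 0" using mu_pos by simp
      moreover have "gv \<bullet> (u - yv) = q * (B \<bullet> gv - A \<bullet> gv)"
        by (simp add: uy inner_diff_right inner_commute)
      ultimately show ?thesis by linarith
    qed
    have psd: "A \<bullet> A - 2 * (A \<bullet> B) + B \<bullet> B \<ge> 0"
    proof -
      have "0 \<le> (A - B) \<bullet> (A - B)" by simp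
      then show ?thesis by (simp add: inner_diff_left inner_diff_right inner_commute)
    qed
    have nexp: "(norm (Z u' yv' - ys))\<^sup>2 = (1 - q)\<^sup>2 * (A \<bullet> A) + q\<^sup>2 * (B \<bullet> B) + (gv \<bullet> gv) / (q\<^sup>2 * L\<^sup>2)
            + 2 * q * (1 - q) * (A \<bullet> B) - 2 * (1 - q) / (q * L) * (A \<bullet> gv) - 2 / L * (B \<bullet> gv)"
      unfolding vid power2_norm_eq_inner using q0 Lpos
      by (simp add: inner_add_left inner_add_right inner_diff_left inner_diff_right inner_commute
          field_simps power2_eq_square)
    have VA: "V u yv = g a u - g a ys + q\<^sup>2 * L / 2 * (A \<bullet> A)"
      by (simp add: V_def A_def mu_eq power2_norm_eq_inner)
    have "V u' yv' = g a u' - g a ys + q\<^sup>2 * L / 2 * ((1 - q)\<^sup>2 * (A \<bullet> A) + q\<^sup>2 * (B \<bullet> B) + (gv \<bullet> gv) / (q\<^sup>2 * L\<^sup>2)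
            + 2 * q * (1 - q) * (A \<bullet> B) - 2 * (1 - q) / (q * L) * (A \<bullet> gv) - 2 / L * (B \<bullet> gv))"
      by (simp add: V_def nexp mu_eq)
    also have "\<dots> \<le> (1 - q) * V u yv"
      unfolding VA by (rule lyap_alg[OF Lpos q0 q1 P1 P2 P3 psd])
    finally show ?thesis by (simp add: u'_def yv'_def gv_def)
  qed
  define st where "st t = inner_state gy (1 / L) \<eta> a y0 t" for t
  have Vnn: "V u yv \<ge> 0" for u yv
  proof -
    have "g a ys \<le> g a u" unfolding ys_def by (rule ystar_min)
    then show ?thesis using mu_pos by (simp add: V_def)
  qed
  have iter: "V (fst (st t)) (snd (st t)) \<le> (1 - q) ^ t * V y0 y0" for t
  proof (induction t)
    case 0
    then show ?case by (simp add: st_def)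
  next
    case (Suc t)
    obtain u yv where uy: "st t = (u, yv)" by (cases "st t")
    have sS: "st (Suc t) = (yv - (1 / L) *\<^sub>R gy a yv,
              (yv - (1 / L) *\<^sub>R gy a yv) + \<eta> *\<^sub>R ((yv - (1 / L) *\<^sub>R gy a yv) - u))"
      using uy by (simp add: st_def Let_def)
    have "V (fst (st (Suc t))) (snd (st (Suc t))) \<le> (1 - q) * V u yv"
      unfolding sS using step by simp
    also have "\<dots> \<le> (1 - q) * ((1 - q) ^ t * V y0 y0)"
      using Suc.IH uy q1 by (intro mult_left_mono) auto
    finally show ?case by simp
  qed
  have V0: "V y0 y0 \<le> (L + \<mu>) / 2 * (norm (y0 - ys))\<^sup>2"
  proof -
    have Z0: "Z y0 y0 = y0" using q0 by (simp add: Z_def algebra_simps)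
    have "g a y0 \<le> g a ys + gy a ys \<bullet> (y0 - ys) + L / 2 * (norm (y0 - ys))\<^sup>2"
      by (rule descent)
    then show ?thesis by (simp add: V_def Z0 gys algebra_simps add_divide_distrib)
  qed
  obtain u yv where uyT: "st T = (u, yv)" by (cases "st T")
  define W where "W = V u yv"
  have WT: "W \<le> (1 - q) ^ T * ((L + \<mu>) / 2 * (norm (y0 - ys))\<^sup>2)"
  proof -
    have "W \<le> (1 - q) ^ T * V y0 y0" using iter[of T] uyT by (simp add: W_def)
    also have "\<dots> \<le> (1 - q) ^ T * ((L + \<mu>) / 2 * (norm (y0 - ys))\<^sup>2)"
      using V0 q1 by (intro mult_left_mono) auto
    finally show ?thesis .
  qed
  define r where "r = sqrt (2 * W / \<mu>)"
  have gu: "\<mu> / 2 * (norm (u - ys))\<^sup>2 \<le> g a u - g a ys"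
    using sc_grad[where a=a and w=u and y=ys] gys by simp
  have gu0: "g a u - g a ys \<ge> 0" using ystar_min[of a u] by (simp add: ys_def)
  have n1: "norm (u - ys) \<le> r"
  proof -
    have "\<mu> / 2 * (norm (Z u yv - ys))\<^sup>2 \<ge> 0" using mu_pos by simp
    then have "\<mu> / 2 * (norm (u - ys))\<^sup>2 \<le> W" using gu unfolding W_def V_def by linarith
    then have "(norm (u - ys))\<^sup>2 \<le> 2 * W / \<mu>" using mu_pos by (simp add: field_simps)
    then show ?thesis unfolding r_def by (rule real_le_rsqrt)
  qed
  have n2: "norm (Z u yv - ys) \<le> r"
  proof -
    have "\<mu> / 2 * (norm (Z u yv - ys))\<^sup>2 \<le> W" using gu0 by (simp add: W_def V_def)
    then have "(norm (Z u yv - ys))\<^sup>2 \<le> 2 * W / \<mu>" using mu_pos by (simp add: field_simps)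
    then show ?thesis unfolding r_def by (rule real_le_rsqrt)
  qed
  have vec: "(u - ys) + q *\<^sub>R (Z u yv - ys) = (1 + q) *\<^sub>R (yv - ys)"
    using q0 by (simp add: Z_def algebra_simps)
  have "(1 + q) * norm (yv - ys) = norm ((u - ys) + q *\<^sub>R (Z u yv - ys))"
    using q0 by (simp add: vec)
  also have "\<dots> \<le> norm (u - ys) + q * norm (Z u yv - ys)"
    using q0 by (metis norm_triangle_ineq norm_scaleR abs_of_pos)
  also have "\<dots> \<le> r + q * r" using n1 n2 q0 by (simp add: mult_left_mono add_mono)
  finally have "(1 + q) * norm (yv - ys) \<le> (1 + q) * r" by (simp add: algebra_simps)
  then have nr: "norm (yv - ys) \<le> r" using q0 by simp
  have "(norm (yv - ys))\<^sup>2 \<le> r\<^sup>2" using nr by (simp add: power_mono)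
  also have "r\<^sup>2 = 2 * W / \<mu>"
    unfolding r_def using Vnn mu_pos by (simp add: W_def)
  also have "\<dots> \<le> 2 / \<mu> * ((1 - q) ^ T * ((L + \<mu>) / 2 * (norm (y0 - ys))\<^sup>2))"
    using WT mu_pos by (simp add: divide_right_mono)
  also have "\<dots> = (1 + L / \<mu>) * (1 - q) ^ T * (norm (y0 - ys))\<^sup>2"
    using mu_pos by (simp add: field_simps)
  finally have fin: "(norm (yv - ys))\<^sup>2 \<le> (1 + L / \<mu>) * (1 - q) ^ T * (norm (y0 - ys))\<^sup>2" .
  have "yT gy (1 / L) ((sqrt (L / \<mu>) - 1) / (sqrt (L / \<mu>) + 1)) T a y0 = yv"
    using uyT by (simp add: yT_def st_def \<eta>_def \<kappa>_def)
  then show ?thesis using fin by (simp add: ys_def q_def \<kappa>_def)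
qed

end

lemma pair_deriv:
  fixes F :: "'a::real_inner \<times> 'b::real_inner \<Rightarrow> real"
  assumes "\<And>a b. (F has_derivative (\<lambda>(u, w). P a b \<bullet> u + Q a b \<bullet> w)) (at (a, b))"
  shows "(F has_derivative (\<lambda>d. (P (fst p) (snd p), Q (fst p) (snd p)) \<bullet> d)) (at p)"
proof -
  have "(\<lambda>(u, w). P (fst p) (snd p) \<bullet> u + Q (fst p) (snd p) \<bullet> w)
      = (\<lambda>d. (P (fst p) (snd p), Q (fst p) (snd p)) \<bullet> d)"
    by (auto simp: fun_eq_iff)
  then show ?thesis using assms[of "fst p" "snd p"] by simp
qed

lemma grad_bound:
  fixes \<phi> :: "'v::real_inner \<Rightarrow> real"
  assumes d: "(\<phi> has_derivative (\<lambda>d. Dp \<bullet> d)) (at p)"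
    and l: "M-lipschitz_on UNIV \<phi>"
  shows "norm Dp \<le> M"
proof -
  have D: "((\<lambda>s. \<phi> (p + s *\<^sub>R Dp)) has_real_derivative (Dp \<bullet> Dp)) (at 0)"
    using line_deriv[of \<phi> Dp p 0 Dp] d by simp
  have "Dp \<bullet> Dp \<le> M * norm Dp - 0"
  proof (rule deriv_le[OF D])
    fix t :: real assume t: "0 < t" "t \<le> 1"
    have "\<phi> (p + t *\<^sub>R Dp) - \<phi> p \<le> dist (\<phi> (p + t *\<^sub>R Dp)) (\<phi> p)" by (simp add: dist_real_def)
    also have "\<dots> \<le> M * dist (p + t *\<^sub>R Dp) p" using lipschitz_onD[OF l] by simp
    also have "\<dots> = t * (M * norm Dp)" using t by (simp add: dist_norm)
    finally show "\<phi> (p + t *\<^sub>R Dp) - \<phi> (p + 0 *\<^sub>R Dp) \<le> t * (M * norm Dp - 0 * (1 - t))" by simp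
  qed
  then have "norm Dp * norm Dp \<le> M * norm Dp" by (simp add: power2_norm_eq_inner[symmetric] power2_eq_square)
  then show ?thesis
    using lipschitz_on_nonneg[OF l] by (cases "norm Dp = 0") auto
qed

lemma psi_remainder:
  fixes gy :: "'a::real_inner \<Rightarrow> 'b::real_inner \<Rightarrow> 'b"
    and Jxy :: "'a \<Rightarrow> 'b \<Rightarrow> ('b \<Rightarrow>\<^sub>L 'a)" and Hyy :: "'a \<Rightarrow> 'b \<Rightarrow> ('b \<Rightarrow>\<^sub>L 'b)"
  assumes gy_deriv: "\<And>a b w. ((\<lambda>z. gy (fst z) (snd z) \<bullet> w) has_derivative
                 (\<lambda>(u, u'). Jxy a b w \<bullet> u + Hyy a b w \<bullet> u')) (at (a, b))"
    and lJ: "\<tau>-lipschitz_on UNIV (\<lambda>z. Jxy (fst z) (snd z))"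
    and lH: "\<rho>-lipschitz_on UNIV (\<lambda>z. Hyy (fst z) (snd z))"
  shows "Jxy a b w \<bullet> dx + Hyy a b w \<bullet> ds
     \<le> gy (a + dx) (b + ds) \<bullet> w - gy a b \<bullet> w
        + norm w * norm (dx, ds) * (\<tau> * norm dx + \<rho> * norm ds) / 2"
proof -
  define c where "c = norm w * norm (dx, ds) * (\<tau> * norm dx + \<rho> * norm ds)"
  define \<phi> where "\<phi> t = - (gy (a + t *\<^sub>R dx) (b + t *\<^sub>R ds) \<bullet> w)" for t
  define \<phi>' where "\<phi>' t = - (Jxy (a + t *\<^sub>R dx) (b + t *\<^sub>R ds) w \<bullet> dx
                          + Hyy (a + t *\<^sub>R dx) (b + t *\<^sub>R ds) w \<bullet> ds)" for t
  have "\<phi> 1 - \<phi> 0 - \<phi>' 0 \<le> c / 2"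
  proof (rule taylor1d)
    fix t :: real assume t: "0 \<le> t" "t \<le> 1"
    have l: "((\<lambda>s. (a, b) + s *\<^sub>R (dx, ds)) has_derivative (\<lambda>s. s *\<^sub>R (dx, ds))) (at t)"
      by (rule derivative_eq_intros | simp)+
    have "((\<lambda>s. (\<lambda>z. gy (fst z) (snd z) \<bullet> w) ((a, b) + s *\<^sub>R (dx, ds))) has_derivative
         (\<lambda>s. (\<lambda>(u, u'). Jxy (a + t *\<^sub>R dx) (b + t *\<^sub>R ds) w \<bullet> u
                 + Hyy (a + t *\<^sub>R dx) (b + t *\<^sub>R ds) w \<bullet> u') (s *\<^sub>R (dx, ds)))) (at t)"
    proof -
      have gd: "((\<lambda>z. gy (fst z) (snd z) \<bullet> w) has_derivative
                 (\<lambda>(u, u'). Jxy (a + t *\<^sub>R dx) (b + t *\<^sub>R ds) w \<bullet> u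
                 + Hyy (a + t *\<^sub>R dx) (b + t *\<^sub>R ds) w \<bullet> u')) (at ((a, b) + t *\<^sub>R (dx, ds)))"
        using gy_deriv by simp
      show ?thesis using has_derivative_compose[OF l gd] by simp
    qed
    then have "((\<lambda>s. gy (a + s *\<^sub>R dx) (b + s *\<^sub>R ds) \<bullet> w) has_derivative
         (\<lambda>s. (Jxy (a + t *\<^sub>R dx) (b + t *\<^sub>R ds) w \<bullet> dx
                 + Hyy (a + t *\<^sub>R dx) (b + t *\<^sub>R ds) w \<bullet> ds) * s)) (at t)"
      by (simp add: algebra_simps)
    then have "((\<lambda>s. gy (a + s *\<^sub>R dx) (b + s *\<^sub>R ds) \<bullet> w) has_real_derivative
         (Jxy (a + t *\<^sub>R dx) (b + t *\<^sub>R ds) w \<bullet> dx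
                 + Hyy (a + t *\<^sub>R dx) (b + t *\<^sub>R ds) w \<bullet> ds)) (at t)"
      by (simp add: has_field_derivative_def)
    then show "(\<phi> has_real_derivative \<phi>' t) (at t)"
      unfolding \<phi>_def \<phi>'_def by (rule DERIV_minus)
    define zt where "zt = (a + t *\<^sub>R dx, b + t *\<^sub>R ds)"
    have dzt: "dist zt (a, b) = t * norm (dx, ds)"
    proof -
      have "(t *\<^sub>R dx, t *\<^sub>R ds) = t *\<^sub>R (dx, ds)" by simp
      then show ?thesis using t by (simp add: zt_def dist_norm del: scaleR_Pair)
    qed
    have nJ: "norm (Jxy (a + t *\<^sub>R dx) (b + t *\<^sub>R ds) - Jxy a b) \<le> \<tau> * (t * norm (dx, ds))"
      using lipschitz_onD[OF lJ, of zt "(a,b)"] dzt by (simp add: zt_def dist_norm)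
    have nH: "norm (Hyy (a + t *\<^sub>R dx) (b + t *\<^sub>R ds) - Hyy a b) \<le> \<rho> * (t * norm (dx, ds))"
      using lipschitz_onD[OF lH, of zt "(a,b)"] dzt by (simp add: zt_def dist_norm)
    have t0: "\<tau> \<ge> 0" "\<rho> \<ge> 0" using lJ lH lipschitz_on_nonneg by blast+
    have "\<phi>' t - \<phi>' 0 = (Jxy a b - Jxy (a + t *\<^sub>R dx) (b + t *\<^sub>R ds)) w \<bullet> dx
                       + (Hyy a b - Hyy (a + t *\<^sub>R dx) (b + t *\<^sub>R ds)) w \<bullet> ds"
      by (simp add: \<phi>'_def blinfun.diff_left inner_diff_left)
    also have "\<dots> \<le> norm ((Jxy a b - Jxy (a + t *\<^sub>R dx) (b + t *\<^sub>R ds)) w) * norm dx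
                   + norm ((Hyy a b - Hyy (a + t *\<^sub>R dx) (b + t *\<^sub>R ds)) w) * norm ds"
      by (intro add_mono norm_cauchy_schwarz)
    also have "\<dots> \<le> (\<tau> * (t * norm (dx, ds)) * norm w) * norm dx
                   + (\<rho> * (t * norm (dx, ds)) * norm w) * norm ds"
    proof (intro add_mono mult_right_mono)
      show "norm ((Jxy a b - Jxy (a + t *\<^sub>R dx) (b + t *\<^sub>R ds)) w) \<le> \<tau> * (t * norm (dx, ds)) * norm w"
        using norm_blinfun[of "Jxy a b - Jxy (a + t *\<^sub>R dx) (b + t *\<^sub>R ds)" w] nJ
        by (smt (verit, ccfv_SIG) mult_right_mono norm_ge_zero norm_minus_commute)
      show "norm ((Hyy a b - Hyy (a + t *\<^sub>R dx) (b + t *\<^sub>R ds)) w) \<le> \<rho> * (t * norm (dx, ds)) * norm w"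
        using norm_blinfun[of "Hyy a b - Hyy (a + t *\<^sub>R dx) (b + t *\<^sub>R ds)" w] nH
        by (smt (verit, ccfv_SIG) mult_right_mono norm_ge_zero norm_minus_commute)
    qed auto
    also have "\<dots> = c * t" by (simp add: c_def algebra_simps)
    finally show "\<phi>' t - \<phi>' 0 \<le> c * t" .
  qed
  then show ?thesis by (simp add: \<phi>_def \<phi>'_def c_def)
qed

context gset
begin
lemma hess_pd:
  fixes Jxy :: "'a \<Rightarrow> 'b \<Rightarrow> ('b \<Rightarrow>\<^sub>L 'a)" and Hyy :: "'a \<Rightarrow> 'b \<Rightarrow> ('b \<Rightarrow>\<^sub>L 'b)"
  assumes gy_deriv: "\<And>a b w. ((\<lambda>z. gy (fst z) (snd z) \<bullet> w) has_derivative
                 (\<lambda>(u, u'). Jxy a b w \<bullet> u + Hyy a b w \<bullet> u')) (at (a, b))"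
  shows "Hyy a b w \<bullet> w \<ge> \<mu> * (norm w)\<^sup>2"
proof -
  have l: "((\<lambda>s. (a, b + s *\<^sub>R w)) has_derivative (\<lambda>s. (0, s *\<^sub>R w))) (at 0)"
    by (rule derivative_eq_intros | simp)+
  have gd: "((\<lambda>z. gy (fst z) (snd z) \<bullet> w) has_derivative
                 (\<lambda>(u, u'). Jxy a b w \<bullet> u + Hyy a b w \<bullet> u')) (at (a, b + 0 *\<^sub>R w))"
    using gy_deriv by simp
  have "((\<lambda>s. gy a (b + s *\<^sub>R w) \<bullet> w) has_derivative (\<lambda>s. (Hyy a b w \<bullet> w) * s)) (at 0)"
    using has_derivative_compose[OF l gd] by (simp add: mult.commute)
  then have "((\<lambda>s. gy a (b + s *\<^sub>R w) \<bullet> w) has_real_derivative (Hyy a b w \<bullet> w)) (at 0)"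
    by (simp add: has_field_derivative_def)
  then have D: "((\<lambda>s. - (gy a (b + s *\<^sub>R w) \<bullet> w)) has_real_derivative - (Hyy a b w \<bullet> w)) (at 0)"
    by (rule DERIV_minus)
  have "- (Hyy a b w \<bullet> w) \<le> - (\<mu> * (norm w)\<^sup>2) - 0"
  proof (rule deriv_le[OF D])
    fix t :: real assume t: "0 < t" "t \<le> 1"
    have "(gy a (b + t *\<^sub>R w) - gy a b) \<bullet> (b + t *\<^sub>R w - b) \<ge> \<mu> * (norm (b + t *\<^sub>R w - b))\<^sup>2"
      by (rule mono)
    then have "t * ((gy a (b + t *\<^sub>R w) - gy a b) \<bullet> w) \<ge> t * (t * (\<mu> * (norm w)\<^sup>2))"
      using t by (simp add: power2_eq_square algebra_simps)
    then have "(gy a (b + t *\<^sub>R w) - gy a b) \<bullet> w \<ge> t * (\<mu> * (norm w)\<^sup>2)"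
      using t by simp
    then show "- (gy a (b + t *\<^sub>R w) \<bullet> w) - - (gy a (b + 0 *\<^sub>R w) \<bullet> w)
         \<le> t * (- (\<mu> * (norm w)\<^sup>2) - 0 * (1 - t))"
      by (simp add: inner_diff_left)
  qed
  then show ?thesis by simp
qed
end

lemma final_scalar:
  fixes \<mu> L M \<tau> \<rho> \<beta> :: real
  assumes mu: "\<mu> > 0" and L0: "L \<ge> 0" and M0: "M \<ge> 0" and t0: "\<tau> \<ge> 0" and r0: "\<rho> \<ge> 0"
    and k1: "L / \<mu> > 1" and b0: "\<beta> > 0"
    and bl: "\<beta> \<le> 1 / 2 * inverse ((L + (2 * L\<^sup>2 + \<tau> * M\<^sup>2) / \<mu> + (\<rho> * L * M + L ^ 3 + \<tau> * M * L) / \<mu>\<^sup>2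
                 + \<rho> * L\<^sup>2 * M / \<mu> ^ 3) + (3 * L\<^sup>2 + 3 * \<tau>\<^sup>2 * M\<^sup>2 / \<mu>\<^sup>2
              + 6 * L\<^sup>2 * (1 + sqrt (L / \<mu>))\<^sup>2 * (L / \<mu> + \<rho> * M / \<mu>\<^sup>2)\<^sup>2) + (L / \<mu>)\<^sup>2)"
  shows "(L + \<tau> * (M / \<mu>) + (L / \<mu>) * (L + \<rho> * (M / \<mu>)))\<^sup>2 / 2
        + (L / 2 * (1 + (L / \<mu>)\<^sup>2) + (M / \<mu>) * (1 + L / \<mu>) * (\<tau> + \<rho> * (L / \<mu>)) / 2)
        + (L / \<mu>)\<^sup>2 / 4 \<le> 1 / (4 * \<beta>)"
proof -
  define k where "k = L / \<mu>"
  define m where "m = M / \<mu>"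
  define c where "c = L * k + \<rho> * m * k"
  define E where "E = L + \<tau> * m + k * (L + \<rho> * m)"
  define LP where "LP = L + (2 * L\<^sup>2 + \<tau> * M\<^sup>2) / \<mu> + (\<rho> * L * M + L ^ 3 + \<tau> * M * L) / \<mu>\<^sup>2
                 + \<rho> * L\<^sup>2 * M / \<mu> ^ 3"
  define G where "G = 3 * L\<^sup>2 + 3 * \<tau>\<^sup>2 * M\<^sup>2 / \<mu>\<^sup>2
              + 6 * L\<^sup>2 * (1 + sqrt (L / \<mu>))\<^sup>2 * (L / \<mu> + \<rho> * M / \<mu>\<^sup>2)\<^sup>2"
  have k1': "k > 1" using k1 by (simp add: k_def)
  have m0: "m \<ge> 0" using M0 mu by (simp add: m_def)
  have LPe: "LP = L + 2 * L * k + \<tau> * M * m + \<rho> * m * k + L * k\<^sup>2 + \<tau> * m * k + \<rho> * m * k\<^sup>2"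
  proof -
    have 1: "(2 * L\<^sup>2 + \<tau> * M\<^sup>2) / \<mu> = 2 * L * k + \<tau> * M * m"
      using mu by (simp add: k_def m_def add_divide_distrib power2_eq_square)
    have 2: "(\<rho> * L * M + L ^ 3 + \<tau> * M * L) / \<mu>\<^sup>2 = \<rho> * m * k + L * k\<^sup>2 + \<tau> * m * k"
      using mu by (simp add: k_def m_def add_divide_distrib power2_eq_square power3_eq_cube mult_ac)
    have 3: "\<rho> * L\<^sup>2 * M / \<mu> ^ 3 = \<rho> * m * k\<^sup>2"
      using mu by (simp add: k_def m_def power2_eq_square power3_eq_cube mult_ac)
    show ?thesis unfolding LP_def 1 2 3 by simp
  qed
  have Lc: "L * (L / \<mu> + \<rho> * M / \<mu>\<^sup>2) = c"
    using mu by (simp add: c_def k_def m_def field_simps power2_eq_square)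
  have sq: "(1 + sqrt (L / \<mu>))\<^sup>2 \<ge> 4"
  proof -
    have "sqrt (L / \<mu>) \<ge> 1" using k1 by simp
    then have "1 + sqrt (L / \<mu>) \<ge> 2" by simp
    then have "(1 + sqrt (L / \<mu>))\<^sup>2 \<ge> 2\<^sup>2" by (rule power_mono) simp
    then show ?thesis by simp
  qed
  have Ge: "G = 3 * L\<^sup>2 + 3 * (\<tau> * m)\<^sup>2 + 6 * (1 + sqrt (L / \<mu>))\<^sup>2 * c\<^sup>2"
  proof -
    have "L\<^sup>2 * (L / \<mu> + \<rho> * M / \<mu>\<^sup>2)\<^sup>2 = c\<^sup>2" using Lc by (metis power_mult_distrib)
    then show ?thesis using mu by (simp add: G_def m_def power_mult_distrib power_divide mult.assoc)
  qed
  have G24: "G \<ge> 3 * L\<^sup>2 + 3 * (\<tau> * m)\<^sup>2 + 24 * c\<^sup>2"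
  proof -
    have "6 * (1 + sqrt (L / \<mu>))\<^sup>2 * c\<^sup>2 \<ge> 6 * 4 * c\<^sup>2"
      using sq by (intro mult_right_mono) auto
    then show ?thesis unfolding Ge by simp
  qed
  have c0: "c \<ge> L"
  proof -
    have "L * k \<ge> L * 1" using k1' L0 by (intro mult_left_mono) auto
    moreover have "\<rho> * m * k \<ge> 0" using r0 m0 k1' by simp
    ultimately show ?thesis by (simp add: c_def)
  qed
  have Ec: "E = L + \<tau> * m + c" by (simp add: E_def c_def algebra_simps)
  have E2: "E\<^sup>2 \<le> 2 * (\<tau> * m)\<^sup>2 + 8 * c\<^sup>2"
  proof -
    have "E\<^sup>2 \<le> 2 * (\<tau> * m)\<^sup>2 + 2 * (L + c)\<^sup>2"
    proof -
      have "(\<tau> * m + (L + c))\<^sup>2 + (\<tau> * m - (L + c))\<^sup>2 = 2 * (\<tau> * m)\<^sup>2 + 2 * (L + c)\<^sup>2"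
        by (simp add: power2_eq_square algebra_simps)
      moreover have "(\<tau> * m - (L + c))\<^sup>2 \<ge> 0" by simp
      ultimately have X: "(\<tau> * m + (L + c))\<^sup>2 \<le> 2 * (\<tau> * m)\<^sup>2 + 2 * (L + c)\<^sup>2" by linarith
      have "E = \<tau> * m + (L + c)" unfolding Ec by simp
      then show ?thesis using X by simp
    qed
    moreover have "(L + c)\<^sup>2 \<le> (2 * c)\<^sup>2" using c0 L0 by (intro power_mono) auto
    ultimately show ?thesis by (simp add: power_mult_distrib)
  qed
  have mt: "m * \<tau> \<le> (\<tau> * m)\<^sup>2 + k\<^sup>2 / 2"
  proof -
    have "m * \<tau> \<le> (\<tau> * m)\<^sup>2 + 1 / 4"
    proof -
      have "(\<tau> * m - 1/2)\<^sup>2 = (\<tau> * m)\<^sup>2 - m * \<tau> + 1/4"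
        by (simp add: power2_eq_square algebra_simps)
      moreover have "(\<tau> * m - 1/2)\<^sup>2 \<ge> 0" by simp
      ultimately show ?thesis by linarith
    qed
    moreover have "k\<^sup>2 \<ge> 1" using k1' by (simp add: one_le_power)
    ultimately show ?thesis by simp
  qed
  have nn: "\<tau> * M * m \<ge> 0" "2 * L * k \<ge> 0" "L\<^sup>2 \<ge> 0" "c\<^sup>2 \<ge> 0"
    using t0 M0 m0 L0 k1' by auto
  define Cc where "Cc = L / 2 * (1 + k\<^sup>2) + m * (1 + k) * (\<tau> + \<rho> * k) / 2"
  have Cc0: "Cc \<ge> 0" using L0 m0 k1' t0 r0 by (simp add: Cc_def)
  have twoC: "2 * Cc
       = L + L * k\<^sup>2 + m * \<tau> + \<tau> * m * k + \<rho> * m * k + \<rho> * m * k\<^sup>2"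
    by (simp add: Cc_def field_simps power2_eq_square)
  have S: "E\<^sup>2 + 2 * Cc + k\<^sup>2 / 2 \<le> LP + G + k\<^sup>2"
    using E2 mt nn G24 LPe twoC by linarith
  have Spos: "LP + G + k\<^sup>2 > 0"
  proof -
    have "E\<^sup>2 \<ge> 0" "k\<^sup>2 > 0" using k1' by auto
    then show ?thesis using S Cc0 by linarith
  qed
  have "\<beta> \<le> 1 / 2 * inverse (LP + G + k\<^sup>2)" using bl by (simp add: LP_def G_def k_def)
  then have "2 * \<beta> * (LP + G + k\<^sup>2) \<le> 1" using Spos by (simp add: field_simps)
  then have "(LP + G + k\<^sup>2) / 2 \<le> 1 / (4 * \<beta>)" using b0 by (simp add: field_simps)
  moreover have "E\<^sup>2 / 2 + Cc + k\<^sup>2 / 4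
      \<le> (LP + G + k\<^sup>2) / 2" using S by simp
  ultimately have X: "E\<^sup>2 / 2 + Cc + k\<^sup>2 / 4 \<le> 1 / (4 * \<beta>)" by linarith
  then show ?thesis unfolding E_def k_def m_def Cc_def .
qed

lemma fin_arith:
  fixes A B e d Q :: real
  assumes "A + e + Q \<le> B + 3 / 4 * d"
  shows "A + 7 / 8 * e \<le> B + 7 / 8 * d - Q - 1 / 8 * (d + e)"
  using assms by (simp add: field_simps)

theorem proposition1:
  fixes f g :: "'a::euclidean_space \<Rightarrow> 'b::euclidean_space \<Rightarrow> real"
    and fx :: "'a \<Rightarrow> 'b \<Rightarrow> 'a" and fy :: "'a \<Rightarrow> 'b \<Rightarrow> 'b"
    and gx :: "'a \<Rightarrow> 'b \<Rightarrow> 'a" and gy :: "'a \<Rightarrow> 'b \<Rightarrow> 'b"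
    and Jxy :: "'a \<Rightarrow> 'b \<Rightarrow> ('b \<Rightarrow>\<^sub>L 'a)"
    and Hyy :: "'a \<Rightarrow> 'b \<Rightarrow> ('b \<Rightarrow>\<^sub>L 'b)"
    and h :: "'a \<Rightarrow> ereal"
    and \<mu> L M \<tau> \<rho> \<alpha> \<beta> \<eta> :: real and T :: nat
    and x :: "nat \<Rightarrow> 'a" and y :: "nat \<Rightarrow> 'b" and v :: "nat \<Rightarrow> 'b"
  defines "\<kappa> \<equiv> L / \<mu>"
    and "L\<^sub>\<Phi> \<equiv> L + (2 * L\<^sup>2 + \<tau> * M\<^sup>2) / \<mu> + (\<rho> * L * M + L ^ 3 + \<tau> * M * L) / \<mu>\<^sup>2
                 + \<rho> * L\<^sup>2 * M / \<mu> ^ 3"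
    and "\<Gamma> \<equiv> 3 * L\<^sup>2 + 3 * \<tau>\<^sup>2 * M\<^sup>2 / \<mu>\<^sup>2
              + 6 * L\<^sup>2 * (1 + sqrt (L / \<mu>))\<^sup>2 * (L / \<mu> + \<rho> * M / \<mu>\<^sup>2)\<^sup>2"
    and "H \<equiv> (\<lambda>x' y'. ereal (Phi f g x') + h x'
                 + ereal (7 / 8 * (norm (yT gy \<alpha> \<eta> T x' y' - ystar g x'))\<^sup>2))"
  assumes \<comment> \<open>gradients of f and g (joint differentiability in z = (x,y))\<close>
    f_deriv: "\<And>a b. ((\<lambda>z. f (fst z) (snd z)) has_derivative
                 (\<lambda>(u, w). fx a b \<bullet> u + fy a b \<bullet> w)) (at (a, b))"
    and g_deriv: "\<And>a b. ((\<lambda>z. g (fst z) (snd z)) has_derivative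
                 (\<lambda>(u, w). gx a b \<bullet> u + gy a b \<bullet> w)) (at (a, b))"
    \<comment> \<open>Jacobian nabla_x nabla_y g and Hessian nabla_y^2 g:
        the gradient of z \<mapsto> nabla_y g(z) . w is (Jxy z w, Hyy z w)\<close>
    and gy_deriv: "\<And>a b w. ((\<lambda>z. gy (fst z) (snd z) \<bullet> w) has_derivative
                 (\<lambda>(u, u'). Jxy a b w \<bullet> u + Hyy a b w \<bullet> u')) (at (a, b))"
    and cont_f: "continuous_on UNIV (\<lambda>z. (fx (fst z) (snd z), fy (fst z) (snd z)))"
    and cont_g: "continuous_on UNIV (\<lambda>z. (gx (fst z) (snd z), gy (fst z) (snd z)))"
    \<comment> \<open>A1\<close>
    and mu_pos: "\<mu> > 0"
    and A1_1: "\<And>a. strongly_convex \<mu> (g a)"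
    and A1_2_proper: "\<forall>a. h a \<noteq> -\<infinity>" "\<exists>a. h a \<noteq> \<infinity>"
    and A1_2_lsc: "lower_semicontinuous h"
    and A1_3_bdd_below: "\<exists>c::real. \<forall>a. ereal c \<le> ereal (Phi f g a) + h a"
    and A1_3_sublevel: "\<And>c::real. bounded {a. ereal (Phi f g a) + h a \<le> ereal c}"
    \<comment> \<open>A2\<close>
    and A2_f: "M-lipschitz_on UNIV (\<lambda>z. f (fst z) (snd z))"
    and A2_grad_f: "L-lipschitz_on UNIV (\<lambda>z. (fx (fst z) (snd z), fy (fst z) (snd z)))"
    and A2_grad_g: "L-lipschitz_on UNIV (\<lambda>z. (gx (fst z) (snd z), gy (fst z) (snd z)))"
    and A2_Jxy: "\<tau>-lipschitz_on UNIV (\<lambda>z. Jxy (fst z) (snd z))"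
    and A2_Hyy: "\<rho>-lipschitz_on UNIV (\<lambda>z. Hyy (fst z) (snd z))"
    \<comment> \<open>parameters\<close>
    and kappa_gt: "\<kappa> > 1"
    and alpha_def: "\<alpha> = 1 / L"
    and eta_def: "\<eta> = (sqrt \<kappa> - 1) / (sqrt \<kappa> + 1)"
    and beta_pos: "0 < \<beta>"
    and beta_le: "\<beta> \<le> 1 / 2 * inverse (L\<^sub>\<Phi> + \<Gamma> + \<kappa>\<^sup>2)"
    and T_ge: "real T \<ge> ln (8 * (1 + \<kappa>)) / ln (inverse (1 - 1 / sqrt \<kappa>))"
    \<comment> \<open>iterates of PBA\<close>
    and y_step: "\<And>k. y (Suc k) = yT gy \<alpha> \<eta> T (x k) (y k)"
    and v_sol: "\<And>k. Hyy (x k) (y (Suc k)) (v k) = fy (x k) (y (Suc k))"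
    and x_step: "\<And>k. x (Suc k) \<in> prox \<beta> h
                  (x k - \<beta> *\<^sub>R (fx (x k) (y (Suc k)) - Jxy (x k) (y (Suc k)) (v k)))"
  shows "\<And>k. H (x (Suc k)) (y (Suc k)) \<le> H (x k) (y k)
           - ereal (1 / (4 * \<beta>) * (norm (x (Suc k) - x k))\<^sup>2)
           - ereal (1 / 8 * ((norm (y (Suc k) - ystar g (x k)))\<^sup>2
                             + (norm (y (Suc (Suc k)) - ystar g (x (Suc k))))\<^sup>2))"
proof -
  have kdef: "\<kappa> = L / \<mu>" using \<open>\<kappa> \<equiv> L / \<mu>\<close> by simp
  have Hdef: "H = (\<lambda>x' y'. ereal (Phi f g x') + h x'
                 + ereal (7 / 8 * (norm (yT gy \<alpha> \<eta> T x' y' - ystar g x'))\<^sup>2))"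
    using \<open>H \<equiv> _\<close> by simp
  interpret gset g gx gy \<mu> L
    by unfold_locales (use g_deriv A2_grad_g mu_pos A1_1 in auto)
  have Lpos: "L > 0" and muL: "\<mu> < L"
    using kappa_gt mu_pos by (auto simp: kdef field_simps)
  have M0: "M \<ge> 0" using A2_f lipschitz_on_nonneg by blast
  have t0: "\<tau> \<ge> 0" using A2_Jxy lipschitz_on_nonneg by blast
  have r0: "\<rho> \<ge> 0" using A2_Hyy lipschitz_on_nonneg by blast
  define m where "m = M / \<mu>"
  have m0: "m \<ge> 0" using M0 mu_pos by (simp add: m_def)
  define E where "E = L + \<tau> * m + \<kappa> * (L + \<rho> * m)"
  define C where "C = L / 2 * (1 + \<kappa>\<^sup>2) + m * (1 + \<kappa>) * (\<tau> + \<rho> * \<kappa>) / 2"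
  have scal: "E\<^sup>2 / 2 + C + \<kappa>\<^sup>2 / 4 \<le> 1 / (4 * \<beta>)"
  proof -
    have b: "\<beta> \<le> 1 / 2 * inverse ((L + (2 * L\<^sup>2 + \<tau> * M\<^sup>2) / \<mu> + (\<rho> * L * M + L ^ 3 + \<tau> * M * L) / \<mu>\<^sup>2
                 + \<rho> * L\<^sup>2 * M / \<mu> ^ 3) + (3 * L\<^sup>2 + 3 * \<tau>\<^sup>2 * M\<^sup>2 / \<mu>\<^sup>2
              + 6 * L\<^sup>2 * (1 + sqrt (L / \<mu>))\<^sup>2 * (L / \<mu> + \<rho> * M / \<mu>\<^sup>2)\<^sup>2) + (L / \<mu>)\<^sup>2)"
      using beta_le \<open>L\<^sub>\<Phi> \<equiv> _\<close> \<open>\<Gamma> \<equiv> _\<close> kdef by simp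
    have k1: "L / \<mu> > 1" using kappa_gt kdef by simp
    show ?thesis
      using final_scalar[OF mu_pos _ M0 t0 r0 k1 beta_pos b] Lpos
      unfolding E_def C_def m_def kdef by simp
  qed
  have theta: "(1 + \<kappa>) * (1 - 1 / sqrt \<kappa>) ^ T \<le> 1 / 8"
  proof -
    define b where "b = 1 - 1 / sqrt \<kappa>"
    have sk: "sqrt \<kappa> > 1" using kappa_gt by simp
    have b0: "0 < b" "b < 1" using sk by (auto simp: b_def field_simps)
    have lnb: "ln b < 0" using b0 by simp
    have li: "ln (inverse b) = - ln b" by (rule ln_inverse)
    have lpos: "ln (inverse b) > 0" using li lnb by simp
    have tg: "ln (8 * (1 + \<kappa>)) / ln (inverse b) \<le> real T" unfolding b_def using T_ge .
    have "ln (8 * (1 + \<kappa>)) \<le> real T * ln (inverse b)"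
      using tg pos_divide_le_eq[OF lpos] by blast
    then have "real T * (- ln b) \<ge> ln (8 * (1 + \<kappa>))" using li by simp
    then have "ln (b ^ T) \<le> ln (1 / (8 * (1 + \<kappa>)))"
      using kappa_gt by (simp add: ln_realpow ln_div)
    then have "b ^ T \<le> 1 / (8 * (1 + \<kappa>))"
      using b0 kappa_gt by simp
    then show ?thesis using kappa_gt by (simp add: b_def field_simps)
  qed
  show "\<And>k. H (x (Suc k)) (y (Suc k)) \<le> H (x k) (y k)
           - ereal (1 / (4 * \<beta>) * (norm (x (Suc k) - x k))\<^sup>2)
           - ereal (1 / 8 * ((norm (y (Suc k) - ystar g (x k)))\<^sup>2
                             + (norm (y (Suc (Suc k)) - ystar g (x (Suc k))))\<^sup>2))"
  proof -
    fix k
    show "H (x (Suc k)) (y (Suc k)) \<le> H (x k) (y k)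
           - ereal (1 / (4 * \<beta>) * (norm (x (Suc k) - x k))\<^sup>2)
           - ereal (1 / 8 * ((norm (y (Suc k) - ystar g (x k)))\<^sup>2
                             + (norm (y (Suc (Suc k)) - ystar g (x (Suc k))))\<^sup>2))"
    proof -
      define xk where "xk = x k"
      define xp where "xp = x (Suc k)"
      define yh where "yh = y (Suc k)"
      define w where "w = v k"
      define s where "s = ystar g xk"
      define sp where "sp = ystar g xp"
      define dx where "dx = xp - xk"
      define ds where "ds = sp - s"
      define D where "D = norm dx"
      define \<delta> where "\<delta> = norm (yh - s)"
      define e' where "e' = (norm (y (Suc (Suc k)) - sp))\<^sup>2"
      define G where "G = fx xk yh - Jxy xk yh w"
      have D0: "D \<ge> 0" and d0: "\<delta> \<ge> 0" by (simp_all add: D_def \<delta>_def)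
      have fy_bd: "norm (fy a b) \<le> M" for a b
      proof -
        have "norm (fx a b, fy a b) \<le> M"
          using grad_bound[OF pair_deriv[OF f_deriv, of "(a,b)"] A2_f] by simp
        then show ?thesis using norm_snd_le[of "fy a b" "fx a b"] by simp
      qed
      have w_bd: "norm w \<le> m"
      proof -
        have "\<mu> * (norm w)\<^sup>2 \<le> Hyy xk yh w \<bullet> w" by (rule hess_pd[OF gy_deriv])
        also have "\<dots> = fy xk yh \<bullet> w" using v_sol[of k] by (simp add: w_def xk_def yh_def)
        also have "\<dots> \<le> norm (fy xk yh) * norm w" by (rule norm_cauchy_schwarz)
        also have "\<dots> \<le> M * norm w" using fy_bd by (simp add: mult_right_mono)
        finally have "\<mu> * (norm w)\<^sup>2 \<le> M * norm w" .
        then have "\<mu> * norm w \<le> M" using M0 by (cases "norm w = 0") (auto simp: power2_eq_square)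
        then show ?thesis using mu_pos by (simp add: m_def field_simps)
      qed
      have ds_bd: "norm ds \<le> \<kappa> * D"
        using ystar_lip[of xp xk] by (simp add: ds_def sp_def s_def D_def dx_def kdef)
      have dz_bd: "norm (dx, ds) \<le> (1 + \<kappa>) * D"
        using norm_Pair_le[of dx ds] ds_bd by (simp add: D_def algebra_simps)
      have fpair: "dist (fx a b, fy a b) (fx a' b', fy a' b') \<le> L * dist (a, b) (a', b')" for a b a' b'
        using lipschitz_onD[OF A2_grad_f, of "(a,b)" "(a',b')"] by simp
      have fx_l: "norm (fx a b - fx a b') \<le> L * norm (b - b')" for a b b'
        using fpair[of a b a b'] dist_fst_le[of "(fx a b, fy a b)" "(fx a b', fy a b')"]
        by (simp add: dist_Pair_Pair dist_norm)
      have fy_l: "norm (fy a b - fy a b') \<le> L * norm (b - b')" for a b b'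
        using fpair[of a b a b'] dist_snd_le[of "(fx a b, fy a b)" "(fx a b', fy a b')"]
        by (simp add: dist_Pair_Pair dist_norm)
      have J_l: "norm (Jxy a b - Jxy a b') \<le> \<tau> * norm (b - b')" for a b b'
        using lipschitz_onD[OF A2_Jxy, of "(a,b)" "(a,b')"] by (simp add: dist_Pair_Pair dist_norm)
      have H_l: "norm (Hyy a b - Hyy a b') \<le> \<rho> * norm (b - b')" for a b b'
        using lipschitz_onD[OF A2_Hyy, of "(a,b)" "(a,b')"] by (simp add: dist_Pair_Pair dist_norm)
      have fdesc: "f xp sp - f xk s - (fx xk s \<bullet> dx + fy xk s \<bullet> ds) \<le> L / 2 * (D\<^sup>2 + (norm ds)\<^sup>2)"
      proof -
        have "(\<lambda>z. f (fst z) (snd z)) (xp, sp) - (\<lambda>z. f (fst z) (snd z)) (xk, s)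
              - (fx (fst (xk, s)) (snd (xk, s)), fy (fst (xk, s)) (snd (xk, s))) \<bullet> ((xp, sp) - (xk, s))
              \<le> L / 2 * (norm ((xp, sp) - (xk, s)))\<^sup>2"
          by (rule lip_taylor_le[OF pair_deriv[OF f_deriv] A2_grad_f])
        then show ?thesis by (simp add: dx_def ds_def D_def norm_Pair)
      qed
      \<comment> \<open>implicit relation through nabla_y g = 0\<close>
      have psi: "Jxy xk s w \<bullet> dx + Hyy xk s w \<bullet> ds \<le> norm w * norm (dx, ds) * (\<tau> * D + \<rho> * norm ds) / 2"
      proof -
        have "Jxy xk s w \<bullet> dx + Hyy xk s w \<bullet> ds
           \<le> gy (xk + dx) (s + ds) \<bullet> w - gy xk s \<bullet> w
              + norm w * norm (dx, ds) * (\<tau> * norm dx + \<rho> * norm ds) / 2"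
          by (rule psi_remainder[OF gy_deriv A2_Jxy A2_Hyy])
        moreover have "gy (xk + dx) (s + ds) = 0" using ystar_grad[of xp] by (simp add: dx_def ds_def sp_def)
        moreover have "gy xk s = 0" using ystar_grad[of xk] by (simp add: s_def)
        ultimately show ?thesis by (simp add: D_def)
      qed
      have split: "fx xk s \<bullet> dx + fy xk s \<bullet> ds = G \<bullet> dx + (fx xk s - fx xk yh) \<bullet> dx
          + (Jxy xk yh w - Jxy xk s w) \<bullet> dx + (fy xk s - Hyy xk s w) \<bullet> ds
          + (Jxy xk s w \<bullet> dx + Hyy xk s w \<bullet> ds)"
        by (simp add: G_def inner_diff_left algebra_simps)
      have b1: "(fx xk s - fx xk yh) \<bullet> dx \<le> L * \<delta> * D"
      proof -
        have "(fx xk s - fx xk yh) \<bullet> dx \<le> norm (fx xk s - fx xk yh) * D"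
          unfolding D_def by (rule norm_cauchy_schwarz)
        also have "\<dots> \<le> L * \<delta> * D"
          using fx_l[of xk s yh] D0 by (simp add: \<delta>_def norm_minus_commute mult_right_mono)
        finally show ?thesis .
      qed
      have b2: "(Jxy xk yh w - Jxy xk s w) \<bullet> dx \<le> \<tau> * m * \<delta> * D"
      proof -
        have "(Jxy xk yh w - Jxy xk s w) \<bullet> dx \<le> norm (Jxy xk yh w - Jxy xk s w) * D"
          unfolding D_def by (rule norm_cauchy_schwarz)
        also have "norm (Jxy xk yh w - Jxy xk s w) \<le> norm (Jxy xk yh - Jxy xk s) * norm w"
          using norm_blinfun[of "Jxy xk yh - Jxy xk s" w] by (simp add: blinfun.diff_left)
        also have "\<dots> \<le> (\<tau> * \<delta>) * m"
          using J_l[of xk yh s] w_bd t0 by (intro mult_mono) (auto simp: \<delta>_def)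
        finally show ?thesis using D0 by (simp add: mult_right_mono mult_ac)
      qed
      have b3: "(fy xk s - Hyy xk s w) \<bullet> ds \<le> (L + \<rho> * m) * \<delta> * (\<kappa> * D)"
      proof -
        have eq: "fy xk s - Hyy xk s w = (fy xk s - fy xk yh) + (Hyy xk yh - Hyy xk s) w"
          using v_sol[of k] by (simp add: w_def xk_def yh_def blinfun.diff_left)
        have n1: "norm (fy xk s - fy xk yh) \<le> L * \<delta>"
          using fy_l[of xk s yh] by (simp add: \<delta>_def norm_minus_commute)
        have n2: "norm ((Hyy xk yh - Hyy xk s) w) \<le> \<rho> * \<delta> * m"
        proof -
          have "norm ((Hyy xk yh - Hyy xk s) w) \<le> norm (Hyy xk yh - Hyy xk s) * norm w"
            by (rule norm_blinfun)
          also have "\<dots> \<le> (\<rho> * \<delta>) * m"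
            using H_l[of xk yh s] w_bd r0 by (intro mult_mono) (auto simp: \<delta>_def)
          finally show ?thesis .
        qed
        have "(fy xk s - Hyy xk s w) \<bullet> ds \<le> norm (fy xk s - Hyy xk s w) * norm ds"
          by (rule norm_cauchy_schwarz)
        also have "norm (fy xk s - Hyy xk s w) \<le> (L + \<rho> * m) * \<delta>"
          unfolding eq using norm_triangle_ineq[of "fy xk s - fy xk yh" "(Hyy xk yh - Hyy xk s) w"] n1 n2
          by (simp add: algebra_simps)
        then have "norm (fy xk s - Hyy xk s w) * norm ds \<le> (L + \<rho> * m) * \<delta> * (\<kappa> * D)"
          using ds_bd Lpos r0 m0 d0 by (intro mult_mono) auto
        finally show ?thesis .
      qed
      have b4: "norm w * norm (dx, ds) * (\<tau> * D + \<rho> * norm ds) / 2 \<le> m * (1 + \<kappa>) * (\<tau> + \<rho> * \<kappa>) / 2 * D\<^sup>2"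
      proof -
        have "\<tau> * D + \<rho> * norm ds \<le> (\<tau> + \<rho> * \<kappa>) * D"
        proof -
          have "\<rho> * norm ds \<le> \<rho> * (\<kappa> * D)" by (rule mult_left_mono[OF ds_bd r0])
          then show ?thesis by (simp add: algebra_simps)
        qed
        then have "norm w * norm (dx, ds) * (\<tau> * D + \<rho> * norm ds) \<le> m * ((1 + \<kappa>) * D) * ((\<tau> + \<rho> * \<kappa>) * D)"
          using w_bd dz_bd t0 r0 D0 m0 kappa_gt by (intro mult_mono) auto
        then show ?thesis by (simp add: power2_eq_square mult_ac)
      qed
      have b5: "L / 2 * (D\<^sup>2 + (norm ds)\<^sup>2) \<le> L / 2 * (1 + \<kappa>\<^sup>2) * D\<^sup>2"
      proof -
        have "(norm ds)\<^sup>2 \<le> (\<kappa> * D)\<^sup>2" using ds_bd by (intro power_mono) auto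
        then show ?thesis using Lpos by (simp add: algebra_simps power_mult_distrib mult_left_mono)
      qed
      have Phi_bd: "f xp sp - f xk s \<le> G \<bullet> dx + E * \<delta> * D + C * D\<^sup>2"
      proof -
        have "E * \<delta> * D = L * \<delta> * D + \<tau> * m * \<delta> * D + (L + \<rho> * m) * \<delta> * (\<kappa> * D)"
          by (simp add: E_def algebra_simps)
        moreover have "C * D\<^sup>2 = m * (1 + \<kappa>) * (\<tau> + \<rho> * \<kappa>) / 2 * D\<^sup>2 + L / 2 * (1 + \<kappa>\<^sup>2) * D\<^sup>2"
          by (simp add: C_def algebra_simps)
        ultimately show ?thesis using fdesc split b1 b2 b3 b4 b5 psi by linarith
      qed
      have e'_bd: "e' \<le> \<delta>\<^sup>2 / 4 + \<kappa>\<^sup>2 * D\<^sup>2 / 4"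
      proof -
        have "e' \<le> (1 + L / \<mu>) * (1 - 1 / sqrt (L / \<mu>)) ^ T * (norm (yh - sp))\<^sup>2"
          using nesterov[OF muL, of T xp yh] y_step[of "Suc k"] alpha_def eta_def
          by (simp add: e'_def xp_def yh_def sp_def kdef)
        also have "\<dots> \<le> 1 / 8 * (norm (yh - sp))\<^sup>2"
          using theta by (intro mult_right_mono) (auto simp: kdef)
        also have "(norm (yh - sp))\<^sup>2 \<le> (\<delta> + \<kappa> * D)\<^sup>2"
        proof -
          have "norm (yh - sp) \<le> norm (yh - s) + norm ds"
            using norm_triangle_ineq[of "yh - s" "s - sp"] by (simp add: ds_def norm_minus_commute)
          then have "norm (yh - sp) \<le> \<delta> + \<kappa> * D" using ds_bd by (simp add: \<delta>_def)
          then show ?thesis by (intro power_mono) auto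
        qed
        then have "1 / 8 * (norm (yh - sp))\<^sup>2 \<le> 1 / 8 * (\<delta> + \<kappa> * D)\<^sup>2" by simp
        also have "\<dots> \<le> \<delta>\<^sup>2 / 4 + \<kappa>\<^sup>2 * D\<^sup>2 / 4"
        proof -
          have "(\<delta> + \<kappa> * D)\<^sup>2 + (\<delta> - \<kappa> * D)\<^sup>2 = 2 * \<delta>\<^sup>2 + 2 * (\<kappa>\<^sup>2 * D\<^sup>2)"
            by (simp add: power2_eq_square algebra_simps)
          moreover have "(\<delta> - \<kappa> * D)\<^sup>2 \<ge> 0" by simp
          ultimately show ?thesis by linarith
        qed
        finally show ?thesis .
      qed
      have young: "E * \<delta> * D \<le> \<delta>\<^sup>2 / 2 + E\<^sup>2 * D\<^sup>2 / 2"
      proof -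
        have "(\<delta> - E * D)\<^sup>2 = \<delta>\<^sup>2 - 2 * (E * \<delta> * D) + E\<^sup>2 * D\<^sup>2"
          by (simp add: power2_eq_square algebra_simps)
        moreover have "(\<delta> - E * D)\<^sup>2 \<ge> 0" by simp
        ultimately show ?thesis by linarith
      qed
      define P where "P = D\<^sup>2"
      have P0: "P \<ge> 0" by (simp add: P_def)
      have scalP: "(E\<^sup>2 / 2 + C + \<kappa>\<^sup>2 / 4) * P \<le> 1 / (4 * \<beta>) * P"
        using scal P0 by (rule mult_right_mono)
      have real_main: "f xp sp + hp + e' + 1 / (4 * \<beta>) * P \<le> f xk s + hk + 3 / 4 * \<delta>\<^sup>2"
        if prox_r: "hp \<le> hk - G \<bullet> dx - P / (2 * \<beta>)" for hp hk
      proof -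
        have "P / (2 * \<beta>) = 2 * (1 / (4 * \<beta>) * P)" using beta_pos by (simp add: field_simps)
        moreover have "(E\<^sup>2 / 2 + C + \<kappa>\<^sup>2 / 4) * P = E\<^sup>2 * D\<^sup>2 / 2 + C * D\<^sup>2 + \<kappa>\<^sup>2 * D\<^sup>2 / 4"
          by (simp add: P_def algebra_simps)
        ultimately show ?thesis using prox_r Phi_bd e'_bd young scalP by (simp add: P_def)
      qed
      have prox_e: "ereal \<beta> * h xp + ereal ((norm (dx + \<beta> *\<^sub>R G))\<^sup>2 / 2)
                    \<le> ereal \<beta> * h xk + ereal ((norm (\<beta> *\<^sub>R G))\<^sup>2 / 2)"
      proof -
        have "xp \<in> prox \<beta> h (xk - \<beta> *\<^sub>R G)"
          using x_step[of k] by (simp add: xp_def xk_def G_def yh_def w_def)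
        then have "ereal \<beta> * h xp + ereal ((norm (xp - (xk - \<beta> *\<^sub>R G)))\<^sup>2 / 2)
                    \<le> ereal \<beta> * h xk + ereal ((norm (xk - (xk - \<beta> *\<^sub>R G)))\<^sup>2 / 2)"
          unfolding prox_def by blast
        moreover have "xp - (xk - \<beta> *\<^sub>R G) = dx + \<beta> *\<^sub>R G" by (simp add: dx_def)
        ultimately show ?thesis by simp
      qed
      have sqexp: "(norm (dx + \<beta> *\<^sub>R G))\<^sup>2 = P + 2 * \<beta> * (G \<bullet> dx) + (norm (\<beta> *\<^sub>R G))\<^sup>2"
      proof -
        have "(norm (dx + \<beta> *\<^sub>R G))\<^sup>2 = dx \<bullet> dx + 2 * \<beta> * (G \<bullet> dx) + (\<beta> *\<^sub>R G) \<bullet> (\<beta> *\<^sub>R G)"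
          by (simp add: power2_norm_eq_inner inner_add_left inner_add_right inner_commute algebra_simps)
        moreover have "P = dx \<bullet> dx" by (simp add: P_def D_def power2_norm_eq_inner)
        moreover have "(norm (\<beta> *\<^sub>R G))\<^sup>2 = (\<beta> *\<^sub>R G) \<bullet> (\<beta> *\<^sub>R G)" by (rule power2_norm_eq_inner)
        ultimately show ?thesis by simp
      qed
      have Hk: "H (x k) (y k) = ereal (f xk s) + h xk + ereal (7 / 8 * \<delta>\<^sup>2)"
        using y_step[of k] by (simp add: Hdef Phi_def xk_def s_def \<delta>_def yh_def)
      have Hp: "H (x (Suc k)) (y (Suc k)) = ereal (f xp sp) + h xp + ereal (7 / 8 * e')"
        using y_step[of "Suc k"] by (simp add: Hdef Phi_def xp_def sp_def e'_def yh_def)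
      have goal_eq: "ereal (1 / (4 * \<beta>) * (norm (x (Suc k) - x k))\<^sup>2) = ereal (1 / (4 * \<beta>) * P)"
        "ereal (1 / 8 * ((norm (y (Suc k) - ystar g (x k)))\<^sup>2 + (norm (y (Suc (Suc k)) - ystar g (x (Suc k))))\<^sup>2))
          = ereal (1 / 8 * (\<delta>\<^sup>2 + e'))"
        by (simp_all add: P_def D_def dx_def xp_def xk_def \<delta>_def yh_def s_def e'_def sp_def)
      show ?thesis
      proof (cases "h xk")
        case PInf
        then show ?thesis unfolding Hk Hp goal_eq by simp
      next
        case MInf
        then show ?thesis using A1_2_proper(1) by simp
      next
        case (real hk)
        show ?thesis
        proof (cases "h xp")
          case PInf
          then show ?thesis using prox_e real beta_pos by simp
        next
          case MInf
          then show ?thesis using A1_2_proper(1) by simp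
        next
          case (real hp)
          have "\<beta> * hp + (norm (dx + \<beta> *\<^sub>R G))\<^sup>2 / 2 \<le> \<beta> * hk + (norm (\<beta> *\<^sub>R G))\<^sup>2 / 2"
            using prox_e \<open>h xk = ereal hk\<close> real by simp
          then have "\<beta> * hp \<le> \<beta> * (hk - G \<bullet> dx - P / (2 * \<beta>))"
          proof -
            have "\<beta> * hp + P / 2 + \<beta> * (G \<bullet> dx) \<le> \<beta> * hk"
              using \<open>\<beta> * hp + _ \<le> _\<close> unfolding sqexp by (simp add: field_simps)
            moreover have "\<beta> * (hk - G \<bullet> dx - P / (2 * \<beta>)) = \<beta> * hk - \<beta> * (G \<bullet> dx) - P / 2"
              using beta_pos by (simp add: right_diff_distrib)
            ultimately show ?thesis by linarith
          qed
          then have "hp \<le> hk - G \<bullet> dx - P / (2 * \<beta>)" using beta_pos by simp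
          from fin_arith[OF real_main[OF this]]
          have R: "f xp sp + hp + 7 / 8 * e' \<le> f xk s + hk + 7 / 8 * \<delta>\<^sup>2 - 1 / (4 * \<beta>) * P - 1 / 8 * (\<delta>\<^sup>2 + e')"
            by (simp add: add.assoc)
          have "ereal (f xp sp) + ereal hp + ereal (7 / 8 * e')
                \<le> ereal (f xk s) + ereal hk + ereal (7 / 8 * \<delta>\<^sup>2) - ereal (1 / (4 * \<beta>) * P) - ereal (1 / 8 * (\<delta>\<^sup>2 + e'))"
            using R by simp
          then show ?thesis unfolding Hk Hp goal_eq using \<open>h xk = ereal hk\<close> real by simp
        qed
      qed
    qed
  qed
qed

end
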